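(* Let $\kappa$ be a constancy measure. Then $\mathrm H^\kappa$ is an unbiased cooperative game mapping satisfying (Bound$_{CG}$), (Dic$_{CG}$), (Dum$_{CG}$) and (Type$_{CG}$). Moreover, for $\kappa=\kappa_{\mathrm{quad}}$, $\mathrm H^{\kappa}$ is chain-rule decomposable and satisfies (ModEC$_{CG}$).
   Context: $X$ is a fixed finite set of variables. An assignment over $U\subseteq X$ is a map $\mathbf u:U\to\{0,1\}$; for $\mathbf v$ over $V$, the cofactor is $f_{\mathbf v}(\mathbf u)=f(\mathbf v;\mathbf u_{X\setminus V})$ ($;$ concatenation, $\mathbf u_{S}$ restriction); $f_{x/c}$ for $V=\{x\}$. For $\mathbf u$ over $X$, $\mathbf u^{\oplus\{y\}}$ flips the value of $y$ and $f^{\oplus y}(\mathbf u)=f(\mathbf u^{\oplus\{y\}})$. $\mathbb B(X)$ is the set of Boolean functions $\{0,1\}^X\to\{0,1\}$, combined pointwise, $\overline f$ negation, a variable $x$ also denotes $\mathbf u\mapsto\mathbf u(x)$, $\ge$ pointwise. $\mathrm{dep}(f)=\{x:f_{x/1}\ne f_{x/0}\}$; $f$ monotone in $x$ if $f_{x/1}\ge f_{x/0}$. For a permutation $\sigma$ of $X$: $(\sigma\mathbf u)(x)=\mathbf u(\sigma^{-1}(x))$, $(\sigma f)(\mathbf u)=f(\sigma^{-1}\mathbf u)$. $f[x/s]=sf_{x/1}\lor\overline sf_{x/0}$. $\mathbb E$ is uniform expectation. Modularity: $f$ is modular in $g$ if $g$ is not constant and there are $\ell\in\mathbb B(X)$,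 $z\in X$ with $\mathrm{dep}(\ell)\cap\mathrm{dep}(g)=\emptyset$ and $f=\ell[z/g]$; monotonically modular if moreover $\ell$ is monotone in $z$. Then $f_{g/1}:=\ell_{z/1}$, $f_{g/0}:=\ell_{z/0}$, and $f[g/w]:=wf_{g/1}\lor\overline wf_{g/0}$. Cooperative games $v:2^X\to\mathbb R$, combined/compared pointwise; $\partial_xv(S)=v(S\cup\{x\})-v(S\setminus\{x\})$. A CGM is a map $f\mapsto\tau_f$ from $\mathbb B(X)$ to cooperative games. Properties, for all $x,y\in X$, permutations $\sigma$, $f,g,h$: (Bound$_{CG}$) $0\le\partial_x\tau_f\le1$; (Dum$_{CG}$) $\partial_x\tau_f=0$ if $x\notin\mathrm{dep}(f)$; (Dic$_{CG}$) $\partial_x\tau_x=\partial_x\tau_{\overline x}=1$; (Type$_{CG}$) $\tau_f(S)=\tau_{\sigma f}(\sigma(S))$ and $\tau_f(S)=\tau_{f^{\oplus y}}(S)$ for all $S$; (ModEC$_{CG}$) $\partial_x\tau_f\ge\partial_x\tau_h$ whenever $f,h$ are monotonically modular in $g$, $f_{g/1}\ge h_{g/1}$, $h_{g/0}\ge f_{g/0}$, $x\in\mathrm{dep}(g)$. $\tau$ is unbiased if $\tau_g=\tau_{\overline g}$; chain-rule decomposable if for all $f$ modular in $g$ and $x\in\mathrm{dep}(g)$: $\partial_x\tau_f=(\partial_x\tau_g)(\partial_{x_g}\tau_{f[g/x_g]})$ for a variable $x_g\notin\mathrm{dep}(f)$. A constancy measure is $\kappa:[0,1]\to[0,1]$ that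 is convex with $\kappa(0)=1$, $\kappa(a)=\kappa(1-a)$ and $\kappa(1/2)=0$; $\kappa_{\mathrm{quad}}(a)=4(a-1/2)^2$. The CGM $\mathrm H^\kappa$ is $\mathrm H^\kappa_f(S)=\mathbb E_{\mathbf a\in\{0,1\}^S}\big[\kappa(\mathbb E[f_{\mathbf a}])\big]$ (uniform over $\mathbf a$). *)

theory Defs
  imports "HOL-Analysis.Analysis"
begin

text \<open>Variables: elements of a finite type 'x (the fixed finite set X = UNIV).\<close>

type_synonym 'x bfun = "('x \<Rightarrow> bool) \<Rightarrow> bool"
type_synonym 'x game = "'x set \<Rightarrow> real"
type_synonym 'x cgm = "'x bfun \<Rightarrow> 'x game"

text \<open>Assignments over a set S of variables, represented extensionally
  (value False outside S), so they correspond bijectively to maps S \<rightarrow> {0,1}.\<close>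
definition assignments :: "'x set \<Rightarrow> ('x \<Rightarrow> bool) set" where
  "assignments S = {a. \<forall>x. x \<notin> S \<longrightarrow> a x = False}"

definition avg :: "'a set \<Rightarrow> ('a \<Rightarrow> real) \<Rightarrow> real" where
  "avg A h = (\<Sum>a\<in>A. h a) / real (card A)"

definition expect :: "('x::finite) bfun \<Rightarrow> real" where
  "expect f = avg UNIV (\<lambda>u. of_bool (f u))"

definition cofactor :: "'x bfun \<Rightarrow> 'x set \<Rightarrow> ('x \<Rightarrow> bool) \<Rightarrow> 'x bfun" where
  "cofactor f V v = (\<lambda>u. f (\<lambda>x. if x \<in> V then v x else u x))"

definition cof1 :: "'x bfun \<Rightarrow> 'x \<Rightarrow> bool \<Rightarrow> 'x bfun" where
  "cof1 f x c = (\<lambda>u. f (u(x := c)))"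

definition var :: "'x \<Rightarrow> 'x bfun" where
  "var x = (\<lambda>u. u x)"

definition dep :: "'x bfun \<Rightarrow> 'x set" where
  "dep f = {x. cof1 f x True \<noteq> cof1 f x False}"

definition monotone_in :: "'x bfun \<Rightarrow> 'x \<Rightarrow> bool" where
  "monotone_in f x \<longleftrightarrow> (\<forall>u. cof1 f x False u \<longrightarrow> cof1 f x True u)"

definition bge :: "'x bfun \<Rightarrow> 'x bfun \<Rightarrow> bool" where
  "bge f h \<longleftrightarrow> (\<forall>u. h u \<longrightarrow> f u)"

text \<open>Permutation action: (\<sigma> u)(x) = u(\<sigma>^{-1} x), (\<sigma> f)(u) = f(\<sigma>^{-1} u),
  so (\<sigma>^{-1} u)(x) = u(\<sigma> x).\<close>
definition perm_bfun :: "('x \<Rightarrow> 'x) \<Rightarrow> 'x bfun \<Rightarrow> 'x bfun" where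
  "perm_bfun \<sigma> f = (\<lambda>u. f (u \<circ> \<sigma>))"

definition flip_bfun :: "'x \<Rightarrow> 'x bfun \<Rightarrow> 'x bfun" where
  "flip_bfun y f = (\<lambda>u. f (u(y := \<not> u y)))"

definition subst :: "'x bfun \<Rightarrow> 'x \<Rightarrow> 'x bfun \<Rightarrow> 'x bfun" where
  "subst f x s = (\<lambda>u. (s u \<and> cof1 f x True u) \<or> (\<not> s u \<and> cof1 f x False u))"

definition nonconstant :: "'x bfun \<Rightarrow> bool" where
  "nonconstant g \<longleftrightarrow> (\<exists>u v. g u \<noteq> g v)"

text \<open>f is modular in g, witnessed by \<ell> and z:  g non-constant,
  dep \<ell> \<inter> dep g = {} and f = \<ell>[z/g].  Then f_{g/1} = \<ell>_{z/1}, f_{g/0} = \<ell>_{z/0}.\<close>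
definition modular_via :: "'x bfun \<Rightarrow> 'x bfun \<Rightarrow> 'x bfun \<Rightarrow> 'x \<Rightarrow> bool" where
  "modular_via f g l z \<longleftrightarrow> nonconstant g \<and> dep l \<inter> dep g = {} \<and> f = subst l z g"

definition modular :: "'x bfun \<Rightarrow> 'x bfun \<Rightarrow> bool" where
  "modular f g \<longleftrightarrow> (\<exists>l z. modular_via f g l z)"

definition mono_modular_via :: "'x bfun \<Rightarrow> 'x bfun \<Rightarrow> 'x bfun \<Rightarrow> 'x \<Rightarrow> bool" where
  "mono_modular_via f g l z \<longleftrightarrow> modular_via f g l z \<and> monotone_in l z"

text \<open>f[g/w] = w f_{g/1} \<or> \<not>w f_{g/0}, with f_{g/c} = \<ell>_{z/c} from the witness.\<close>
definition gsubst :: "'x bfun \<Rightarrow> 'x \<Rightarrow> 'x bfun \<Rightarrow> 'x bfun" where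
  "gsubst l z w = (\<lambda>u. (w u \<and> cof1 l z True u) \<or> (\<not> w u \<and> cof1 l z False u))"

definition gderiv :: "'x \<Rightarrow> 'x game \<Rightarrow> 'x game" where
  "gderiv x v = (\<lambda>S. v (insert x S) - v (S - {x}))"

definition bound_cg :: "('x::finite) cgm \<Rightarrow> bool" where
  "bound_cg \<tau> \<longleftrightarrow> (\<forall>f x S. 0 \<le> gderiv x (\<tau> f) S \<and> gderiv x (\<tau> f) S \<le> 1)"

definition dum_cg :: "('x::finite) cgm \<Rightarrow> bool" where
  "dum_cg \<tau> \<longleftrightarrow> (\<forall>f x. x \<notin> dep f \<longrightarrow> (\<forall>S. gderiv x (\<tau> f) S = 0))"

definition dic_cg :: "('x::finite) cgm \<Rightarrow> bool" where
  "dic_cg \<tau> \<longleftrightarrow> (\<forall>x S. gderiv x (\<tau> (var x)) S = 1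
                      \<and> gderiv x (\<tau> (\<lambda>u. \<not> var x u)) S = 1)"

definition type_cg :: "('x::finite) cgm \<Rightarrow> bool" where
  "type_cg \<tau> \<longleftrightarrow> (\<forall>f \<sigma> y S. bij \<sigma> \<longrightarrow>
      \<tau> f S = \<tau> (perm_bfun \<sigma> f) (\<sigma> ` S) \<and> \<tau> f S = \<tau> (flip_bfun y f) S)"

definition modec_cg :: "('x::finite) cgm \<Rightarrow> bool" where
  "modec_cg \<tau> \<longleftrightarrow> (\<forall>f h g lf zf lh zh x.
      mono_modular_via f g lf zf \<and> mono_modular_via h g lh zh \<and>
      bge (cof1 lf zf True) (cof1 lh zh True) \<and>
      bge (cof1 lh zh False) (cof1 lf zf False) \<and>
      x \<in> dep g \<longrightarrow> (\<forall>S. gderiv x (\<tau> f) S \<ge> gderiv x (\<tau> h) S))"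

definition unbiased :: "('x::finite) cgm \<Rightarrow> bool" where
  "unbiased \<tau> \<longleftrightarrow> (\<forall>g. \<tau> g = \<tau> (\<lambda>u. \<not> g u))"

text \<open>Chain-rule decomposability; "for a variable x_g \<notin> dep f" read as: for any such variable.\<close>
definition chain_rule_decomposable :: "('x::finite) cgm \<Rightarrow> bool" where
  "chain_rule_decomposable \<tau> \<longleftrightarrow> (\<forall>f g l z x xg.
      modular_via f g l z \<and> x \<in> dep g \<and> xg \<notin> dep f \<longrightarrow>
      (\<forall>S. gderiv x (\<tau> f) S
            = gderiv x (\<tau> g) S * gderiv xg (\<tau> (gsubst l z (var xg))) S))"

definition constancy_measure :: "(real \<Rightarrow> real) \<Rightarrow> bool" where
  "constancy_measure \<kappa> \<longleftrightarrow> (\<forall>a\<in>{0..1}. \<kappa> a \<in> {0..1}) \<and> convex_on {0..1} \<kappa>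
     \<and> \<kappa> 0 = 1 \<and> (\<forall>a\<in>{0..1}. \<kappa> a = \<kappa> (1 - a)) \<and> \<kappa> (1/2) = 0"

definition kappa_quad :: "real \<Rightarrow> real" where
  "kappa_quad a = 4 * (a - 1/2)^2"

definition Hk :: "(real \<Rightarrow> real) \<Rightarrow> ('x::finite) cgm" where
  "Hk \<kappa> f S = avg (assignments S) (\<lambda>a. \<kappa> (expect (cofactor f S a)))"

end

theory Submission
  imports Defs
begin


definition mix :: "'x set \<Rightarrow> ('x \<Rightarrow> bool) \<Rightarrow> ('x \<Rightarrow> bool) \<Rightarrow> ('x \<Rightarrow> bool)" where
  "mix S u v = (\<lambda>y. if y \<in> S then u y else v y)"

definition donly :: "'x set \<Rightarrow> (('x \<Rightarrow> bool) \<Rightarrow> 'b) \<Rightarrow> bool" where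
  "donly A \<phi> \<longleftrightarrow> (\<forall>u u'. (\<forall>y\<in>A. u y = u' y) \<longrightarrow> \<phi> u = \<phi> u')"

lemma cardN_pos: "card (UNIV::('x::finite\<Rightarrow>bool) set) > 0"
  by (simp add: card_gt_0_iff)

lemma mixsum:
  fixes g :: "('x::finite \<Rightarrow> bool) \<Rightarrow> real"
  shows "(\<Sum>u\<in>UNIV. \<Sum>w\<in>UNIV. g (mix A u w)) = real (card (UNIV::('x\<Rightarrow>bool) set)) * (\<Sum>p\<in>UNIV. g p)"
proof -
  have "(\<Sum>u\<in>UNIV. \<Sum>w\<in>UNIV. g (mix A u w)) = (\<Sum>uw\<in>UNIV\<times>UNIV. g (mix A (fst uw) (snd uw)))"
    by (simp add: sum.cartesian_product case_prod_beta)
  also have "\<dots> = (\<Sum>pq\<in>(UNIV::('x\<Rightarrow>bool) set)\<times>(UNIV::('x\<Rightarrow>bool) set). g (fst pq))"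
    by (rule sum.reindex_bij_witness[where i="\<lambda>pq. (mix A (fst pq) (snd pq), mix A (snd pq) (fst pq))" and j="\<lambda>pq. (mix A (fst pq) (snd pq), mix A (snd pq) (fst pq))"])
       (auto simp: mix_def fun_eq_iff)
  also have "\<dots> = (\<Sum>(p,q)\<in>(UNIV::('x\<Rightarrow>bool) set)\<times>(UNIV::('x\<Rightarrow>bool) set). g p)"
    by (simp add: case_prod_beta)
  also have "\<dots> = (\<Sum>p\<in>UNIV. \<Sum>q\<in>(UNIV::('x\<Rightarrow>bool) set). g p)"
    by (rule sum.cartesian_product[symmetric])
  also have "\<dots> = real (card (UNIV::('x\<Rightarrow>bool) set)) * (\<Sum>p\<in>UNIV. g p)"
    by (simp add: sum_distrib_left)
  finally show ?thesis .
qed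

lemma indep:
  fixes \<phi> \<psi> :: "('x::finite \<Rightarrow> bool) \<Rightarrow> real"
  assumes "donly A \<phi>" "donly (-A) \<psi>"
  shows "avg UNIV (\<lambda>u. \<phi> u * \<psi> u) = avg UNIV \<phi> * avg UNIV \<psi>"
proof -
  let ?N = "real (card (UNIV::('x\<Rightarrow>bool) set))"
  have "?N * (\<Sum>u\<in>UNIV. \<phi> u * \<psi> u) = (\<Sum>u\<in>UNIV. \<Sum>w\<in>UNIV. \<phi> (mix A u w) * \<psi> (mix A u w))"
    by (rule mixsum[of "\<lambda>p. \<phi> p * \<psi> p" A, symmetric])
  also have "\<dots> = (\<Sum>u\<in>UNIV. \<Sum>w\<in>UNIV. \<phi> u * \<psi> w)"
  proof -
    have e1: "\<phi> (mix A u w) = \<phi> u" for u w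
    proof -
      have "\<forall>y\<in>A. mix A u w y = u y" by (simp add: mix_def)
      then show ?thesis using assms(1) unfolding donly_def by blast
    qed
    have e2: "\<psi> (mix A u w) = \<psi> w" for u w
    proof -
      have "\<forall>y\<in>-A. mix A u w y = w y" by (simp add: mix_def)
      then show ?thesis using assms(2) unfolding donly_def by blast
    qed
    show ?thesis by (simp only: e1 e2)
  qed
  also have "\<dots> = (\<Sum>u\<in>UNIV. \<phi> u) * (\<Sum>w\<in>UNIV. \<psi> w)"
    by (simp add: sum_product)
  finally have *: "?N * (\<Sum>u\<in>UNIV. \<phi> u * \<psi> u) = (\<Sum>u\<in>UNIV. \<phi> u) * (\<Sum>w\<in>UNIV. \<psi> w)" .
  have "?N > 0" using cardN_pos by simp
  then show ?thesis unfolding avg_def using * by (simp add: field_simps)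
qed

lemma split_sum:
  fixes h :: "('x::finite \<Rightarrow> bool) \<Rightarrow> real"
  shows "(\<Sum>v\<in>UNIV. h v) = ((\<Sum>v\<in>UNIV. h (v(x:=True))) + (\<Sum>v\<in>UNIV. h (v(x:=False)))) / 2"
proof -
  have c: "(\<Sum>v\<in>UNIV. h (v(x:=c))) = 2 * (\<Sum>v\<in>{v. v x = c}. h v)" for c
  proof -
    have U: "(UNIV::('x\<Rightarrow>bool) set) = {v. v x = c} \<union> {v. v x \<noteq> c}" by auto
    have "(\<Sum>v\<in>UNIV. h (v(x:=c))) = (\<Sum>v\<in>{v. v x = c}. h (v(x:=c))) + (\<Sum>v\<in>{v. v x \<noteq> c}. h (v(x:=c)))"
      by (subst U, rule sum.union_disjoint) auto
    also have "(\<Sum>v\<in>{v. v x = c}. h (v(x:=c))) = (\<Sum>v\<in>{v. v x = c}. h v)"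
    proof (rule sum.cong)
      fix v assume "v \<in> {v. v x = c}"
      then have "v(x:=c) = v" by auto
      then show "h (v(x:=c)) = h v" by simp
    qed simp
    also have "(\<Sum>v\<in>{v. v x \<noteq> c}. h (v(x:=c))) = (\<Sum>v\<in>{v. v x = c}. h v)"
      by (rule sum.reindex_bij_witness[where i="\<lambda>v. v(x:=\<not> c)" and j="\<lambda>v. v(x:=c)"]) (auto simp: fun_eq_iff)
    finally show ?thesis by linarith
  qed
  have U: "(UNIV::('x\<Rightarrow>bool) set) = {v. v x = True} \<union> {v. v x = False}" by auto
  have "(\<Sum>v\<in>UNIV. h v) = (\<Sum>v\<in>{v. v x = True}. h v) + (\<Sum>v\<in>{v. v x = False}. h v)"
    by (subst U, rule sum.union_disjoint) auto
  then show ?thesis using c[of True] c[of False] by (simp add: field_simps)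
qed

lemma split_avg:
  fixes h :: "('x::finite \<Rightarrow> bool) \<Rightarrow> real"
  shows "avg UNIV h = (avg UNIV (\<lambda>v. h (v(x:=True))) + avg UNIV (\<lambda>v. h (v(x:=False)))) / 2"
  unfolding avg_def using split_sum[of h x] by (simp add: add_divide_distrib)



lemma avg_const[simp]: "avg (UNIV::('x::finite\<Rightarrow>bool) set) (\<lambda>_. c) = c"
  using cardN_pos[where 'x='x] by (simp add: avg_def)

lemma avg_add: "avg A (\<lambda>u. \<phi> u + \<psi> u) = avg A \<phi> + avg A \<psi>"
  by (simp add: avg_def sum.distrib add_divide_distrib)

lemma avg_cmult: "avg A (\<lambda>u. c * \<phi> u) = c * avg A \<phi>"
  by (simp add: avg_def sum_distrib_left)

lemma avg_diff: "avg A (\<lambda>u. \<phi> u - \<psi> u) = avg A \<phi> - avg A \<psi>"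
  by (simp add: avg_def sum_subtractf diff_divide_distrib)

lemma avg_mono: "(\<And>u. \<phi> u \<le> \<psi> u) \<Longrightarrow> avg A \<phi> \<le> avg A \<psi>"
  unfolding avg_def by (intro divide_right_mono sum_mono) auto

lemma avg_bounds: "(\<And>u. a \<le> \<phi> u \<and> \<phi> u \<le> b) \<Longrightarrow> a \<le> avg (UNIV::('x::finite\<Rightarrow>bool) set) \<phi> \<and> avg (UNIV::('x::finite\<Rightarrow>bool) set) \<phi> \<le> b"
  using avg_mono[of "\<lambda>_. a" \<phi> UNIV] avg_mono[of \<phi> "\<lambda>_. b" UNIV] by auto

lemma expect_alt: "expect h = avg UNIV (\<lambda>u. of_bool (h u))"
  by (simp add: expect_def)

lemma expect_01: "0 \<le> expect h \<and> expect h \<le> 1"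
  unfolding expect_def by (rule avg_bounds) auto

lemma expect_not: "expect (\<lambda>u. \<not> h u) = 1 - expect h"
proof -
  have "expect (\<lambda>u. \<not> h u) = avg UNIV (\<lambda>u. 1 - of_bool (h u))"
    unfolding expect_def by (rule arg_cong[where f="avg UNIV"]) auto
  also have "\<dots> = 1 - expect h" by (simp add: avg_diff expect_def)
  finally show ?thesis .
qed

lemma cofactor_mix: "cofactor f S u = (\<lambda>v. f (mix S u v))"
  by (simp add: cofactor_def mix_def)

lemma avg_assign:
  fixes \<phi> :: "('x::finite \<Rightarrow> bool) \<Rightarrow> real"
  shows "avg (assignments S) \<phi> = avg UNIV (\<lambda>u. \<phi> (mix S u (\<lambda>_. False)))"
proof -
  let ?AS = "assignments S" and ?AC = "assignments (-S)"
  define P where "P = (\<lambda>u::'x\<Rightarrow>bool. (mix S u (\<lambda>_. False), mix (-S) u (\<lambda>_. False)))"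
  have bij: "bij_betw P UNIV (?AS \<times> ?AC)"
    by (rule bij_betw_byWitness[where f'="\<lambda>ab. mix S (fst ab) (snd ab)"])
       (auto simp: P_def mix_def assignments_def fun_eq_iff)
  have fin: "finite ?AS" "finite ?AC" by auto
  have ne: "?AC \<noteq> {}" by (auto simp: assignments_def)
  have s1: "(\<Sum>u\<in>UNIV. \<phi> (mix S u (\<lambda>_. False))) = (\<Sum>ab\<in>?AS \<times> ?AC. \<phi> (fst ab))"
    using sum.reindex_bij_betw[OF bij, of "\<lambda>ab. \<phi> (fst ab)"] by (simp add: P_def)
  also have "\<dots> = (\<Sum>(a,b)\<in>?AS \<times> ?AC. \<phi> a)"
    by (simp add: case_prod_beta)
  also have "\<dots> = (\<Sum>a\<in>?AS. \<Sum>b\<in>?AC. \<phi> a)"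
    by (rule sum.cartesian_product[symmetric])
  also have "\<dots> = real (card ?AC) * (\<Sum>a\<in>?AS. \<phi> a)"
    by (simp add: sum_distrib_left)
  finally have s: "(\<Sum>u\<in>UNIV. \<phi> (mix S u (\<lambda>_. False))) = real (card ?AC) * (\<Sum>a\<in>?AS. \<phi> a)" .
  have c: "card (UNIV::('x\<Rightarrow>bool) set) = card ?AS * card ?AC"
    using bij_betw_same_card[OF bij] by (simp add: card_cartesian_product)
  have "card ?AC > 0" using fin ne by (simp add: card_gt_0_iff)
  then show ?thesis unfolding avg_def s c using ne by (simp add: field_simps)
qed

lemma Hk_rep: "Hk \<kappa> f S = avg UNIV (\<lambda>u. \<kappa> (expect (\<lambda>v. f (mix S u v))))"
  unfolding Hk_def avg_assign cofactor_mix
  by (rule arg_cong[where f="avg UNIV"]) (auto simp: mix_def fun_eq_iff)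



lemma mix_ins: "mix (S - {x}) u (v(x:=c)) = mix (insert x S) (u(x:=c)) v"
  by (auto simp: mix_def fun_eq_iff)

lemma expect_split:
  "expect (\<lambda>v. f (mix (S - {x}) u v)) =
   (expect (\<lambda>v. f (mix (insert x S) (u(x:=True)) v)) + expect (\<lambda>v. f (mix (insert x S) (u(x:=False)) v))) / 2"
  unfolding expect_def
  by (subst split_avg[where x=x]) (simp add: mix_ins)

lemma avg_half: "avg A (\<lambda>u. (\<phi> u + \<psi> u)/2) = (avg A \<phi> + avg A \<psi>)/2"
proof -
  have "avg A (\<lambda>u. (\<phi> u + \<psi> u)/2) = avg A (\<lambda>u. (1/2) * (\<phi> u + \<psi> u))" by simp
  also have "\<dots> = (avg A \<phi> + avg A \<psi>)/2" by (simp only: avg_cmult avg_add)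
  finally show ?thesis .
qed

lemma bound_gen:
  fixes \<kappa> :: "real \<Rightarrow> real" and f :: "('x::finite) bfun"
  assumes rng: "\<And>a. 0 \<le> a \<Longrightarrow> a \<le> 1 \<Longrightarrow> 0 \<le> \<kappa> a \<and> \<kappa> a \<le> 1"
    and mid: "\<And>a b. 0 \<le> a \<Longrightarrow> a \<le> 1 \<Longrightarrow> 0 \<le> b \<Longrightarrow> b \<le> 1 \<Longrightarrow> \<kappa> ((a+b)/2) \<le> (\<kappa> a + \<kappa> b)/2"
  shows "0 \<le> gderiv x (Hk \<kappa> f) S \<and> gderiv x (Hk \<kappa> f) S \<le> 1"
proof -
  define p where "p = (\<lambda>T u. expect (\<lambda>v. f (mix T u v)))"
  have p01: "0 \<le> p T u \<and> p T u \<le> 1" for T u unfolding p_def by (rule expect_01)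
  have H01: "0 \<le> Hk \<kappa> f T \<and> Hk \<kappa> f T \<le> 1" for T
    unfolding Hk_rep by (rule avg_bounds) (use rng expect_01 in blast)
  have ps: "p (S - {x}) u = (p (insert x S) (u(x:=True)) + p (insert x S) (u(x:=False)))/2" for u
    unfolding p_def by (rule expect_split)
  have "Hk \<kappa> f (S - {x}) = avg UNIV (\<lambda>u. \<kappa> (p (S - {x}) u))"
    unfolding Hk_rep p_def ..
  also have "\<dots> \<le> avg UNIV (\<lambda>u. (\<kappa> (p (insert x S) (u(x:=True))) + \<kappa> (p (insert x S) (u(x:=False))))/2)"
  proof (rule avg_mono)
    fix u
    show "\<kappa> (p (S - {x}) u) \<le> (\<kappa> (p (insert x S) (u(x:=True))) + \<kappa> (p (insert x S) (u(x:=False))))/2"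
      unfolding ps using mid p01 by blast
  qed
  also have "\<dots> = avg UNIV (\<lambda>u. \<kappa> (p (insert x S) u))"
    by (subst split_avg[where x=x and h="\<lambda>u. \<kappa> (p (insert x S) u)"]) (rule avg_half)
  also have "\<dots> = Hk \<kappa> f (insert x S)"
    unfolding Hk_rep p_def ..
  finally have le: "Hk \<kappa> f (S - {x}) \<le> Hk \<kappa> f (insert x S)" .
  have a1: "0 \<le> Hk \<kappa> f (S - {x})" and a2: "Hk \<kappa> f (insert x S) \<le> 1"
    using H01 by blast+
  show ?thesis unfolding gderiv_def using le a1 a2 by linarith
qed

lemma nodep_upd: "x \<notin> dep f \<Longrightarrow> f (w(x:=c)) = f w"
proof -
  assume "x \<notin> dep f"
  then have e: "f (w(x:=True)) = f (w(x:=False))" for w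
  proof -
    have "cof1 f x True = cof1 f x False" using \<open>x \<notin> dep f\<close> by (simp add: dep_def)
    then show ?thesis unfolding cof1_def by (rule fun_cong)
  qed
  have w1: "w x \<Longrightarrow> w(x:=True) = w" and w0: "\<not> w x \<Longrightarrow> w(x:=False) = w"
    by (auto simp: fun_eq_iff)
  show ?thesis
  proof (cases "w x")
    case True then show ?thesis using e[of w] w1 by (cases c) auto
  next
    case False then show ?thesis using e[of w] w0 by (cases c) auto
  qed
qed

lemma dum_gen: "x \<notin> dep f \<Longrightarrow> gderiv x (Hk \<kappa> f) S = 0"
proof -
  assume a: "x \<notin> dep f"
  have "mix (insert x S) u v = (mix (S - {x}) u v)(x := u x)" for u v
    by (auto simp: mix_def fun_eq_iff)
  then have "f (mix (insert x S) u v) = f (mix (S - {x}) u v)" for u v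
    using nodep_upd[OF a] by simp
  then show ?thesis unfolding gderiv_def Hk_rep by (simp only:)
qed


lemma expect_var: "expect (\<lambda>v::'x::finite\<Rightarrow>bool. v x) = 1/2"
  unfolding expect_def by (subst split_avg[where x=x]) simp

lemma expect_nvar: "expect (\<lambda>v::'x::finite\<Rightarrow>bool. \<not> v x) = 1/2"
  unfolding expect_def by (subst split_avg[where x=x]) simp

lemma expect_const: "expect (\<lambda>v::'x::finite\<Rightarrow>bool. b) = of_bool b"
  unfolding expect_def by simp

lemma cm_props:
  assumes "constancy_measure \<kappa>"
  shows "\<And>a. 0 \<le> a \<Longrightarrow> a \<le> 1 \<Longrightarrow> 0 \<le> \<kappa> a \<and> \<kappa> a \<le> 1"
    and "\<And>a b. 0 \<le> a \<Longrightarrow> a \<le> 1 \<Longrightarrow> 0 \<le> b \<Longrightarrow> b \<le> 1 \<Longrightarrow> \<kappa> ((a+b)/2) \<le> (\<kappa> a + \<kappa> b)/2"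
    and "\<kappa> 0 = 1" "\<kappa> 1 = 1" "\<kappa> (1/2) = 0"
    and "\<And>a. 0 \<le> a \<Longrightarrow> a \<le> 1 \<Longrightarrow> \<kappa> (1 - a) = \<kappa> a"
proof -
  note d = assms[unfolded constancy_measure_def]
  have d1: "\<forall>a\<in>{0..1}. \<kappa> a \<in> {0..1}" using d by (rule conjunct1)
  have c: "convex_on {0..1} \<kappa>" using d[THEN conjunct2] by (rule conjunct1)
  have k0: "\<kappa> 0 = 1" using d[THEN conjunct2, THEN conjunct2] by (rule conjunct1)
  have sy: "\<forall>a\<in>{0..1}. \<kappa> a = \<kappa> (1 - a)" using d[THEN conjunct2, THEN conjunct2, THEN conjunct2] by (rule conjunct1)
  have kh: "\<kappa> (1/2) = 0" using d[THEN conjunct2, THEN conjunct2, THEN conjunct2] by (rule conjunct2)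
  show "\<And>a. 0 \<le> a \<Longrightarrow> a \<le> 1 \<Longrightarrow> 0 \<le> \<kappa> a \<and> \<kappa> a \<le> 1"
  proof -
    fix a :: real assume "0 \<le> a" "a \<le> 1"
    then have "a \<in> {0..1}" by simp
    then have "\<kappa> a \<in> {0..1}" using d1 by blast
    then show "0 \<le> \<kappa> a \<and> \<kappa> a \<le> 1" by simp
  qed
  show "\<kappa> 0 = 1" "\<kappa> (1/2) = 0" by (fact k0, fact kh)
  show sa: "\<And>a. 0 \<le> a \<Longrightarrow> a \<le> 1 \<Longrightarrow> \<kappa> (1 - a) = \<kappa> a"
  proof -
    fix a :: real assume "0 \<le> a" "a \<le> 1"
    then have "a \<in> {0..1}" by simp
    then show "\<kappa> (1 - a) = \<kappa> a" using sy by metis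
  qed
  have "\<kappa> (1 - 0) = \<kappa> 0" by (rule sa) simp_all
  then show "\<kappa> 1 = 1" using k0 by simp
  show "\<And>a b. 0 \<le> a \<Longrightarrow> a \<le> 1 \<Longrightarrow> 0 \<le> b \<Longrightarrow> b \<le> 1 \<Longrightarrow> \<kappa> ((a+b)/2) \<le> (\<kappa> a + \<kappa> b)/2"
  proof -
    fix a b :: real assume ab: "0 \<le> a" "a \<le> 1" "0 \<le> b" "b \<le> 1"
    have "\<kappa> ((1 - 1/2) *\<^sub>R a + (1/2) *\<^sub>R b) \<le> (1 - 1/2) * \<kappa> a + (1/2) * \<kappa> b"
      by (rule convex_onD[OF c]) (use ab in auto)
    moreover have e1: "(1 - 1/2) *\<^sub>R a + (1/2) *\<^sub>R b = (a+b)/2" by simp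
    ultimately have "\<kappa> ((a+b)/2) \<le> (1 - 1/2) * \<kappa> a + (1/2) * \<kappa> b" by (simp only: e1)
    moreover have "(1 - 1/2) * \<kappa> a + (1/2) * \<kappa> b = (\<kappa> a + \<kappa> b)/2" by (simp add: field_simps)
    ultimately show "\<kappa> ((a+b)/2) \<le> (\<kappa> a + \<kappa> b)/2" by (simp only:)
  qed
qed

lemma kappa_bool: "\<kappa> 0 = 1 \<Longrightarrow> \<kappa> 1 = 1 \<Longrightarrow> \<kappa> (of_bool b) = 1"
  by (cases b) auto

lemma dic_gen:
  fixes \<kappa> :: "real \<Rightarrow> real"
  assumes k0: "\<kappa> 0 = 1" and k1: "\<kappa> 1 = 1" and kh: "\<kappa> (1/2) = 0"
  shows "gderiv x (Hk \<kappa> (var x :: ('x::finite) bfun)) S = 1 \<and> gderiv x (Hk \<kappa> ((\<lambda>u. \<not> var x u) :: ('x::finite) bfun)) S = 1"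
proof -
  have m1: "mix (insert x S) u v x = u x" for u v :: "'x \<Rightarrow> bool" by (simp add: mix_def)
  have m2: "mix (S - {x}) u v x = v x" for u v :: "'x \<Rightarrow> bool" by (simp add: mix_def)
  have a1: "Hk \<kappa> (var x :: 'x bfun) (insert x S) = 1"
    unfolding Hk_rep var_def m1 expect_const using kappa_bool[OF k0 k1] by simp
  have a2: "Hk \<kappa> (var x :: 'x bfun) (S - {x}) = 0"
    unfolding Hk_rep var_def m2 expect_var kh by simp
  have b1: "Hk \<kappa> ((\<lambda>u. \<not> var x u) :: 'x bfun) (insert x S) = 1"
    unfolding Hk_rep var_def m1 expect_const using kappa_bool[OF k0 k1] by simp
  have b2: "Hk \<kappa> ((\<lambda>u. \<not> var x u) :: 'x bfun) (S - {x}) = 0"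
    unfolding Hk_rep var_def m2 expect_nvar kh by simp
  show ?thesis unfolding gderiv_def a1 a2 b1 b2 by simp
qed

lemma unbiased_gen:
  fixes \<kappa> :: "real \<Rightarrow> real"
  assumes sym: "\<And>a. 0 \<le> a \<Longrightarrow> a \<le> 1 \<Longrightarrow> \<kappa> (1 - a) = \<kappa> a"
  shows "Hk \<kappa> (g::('x::finite) bfun) S = Hk \<kappa> (\<lambda>u. \<not> g u) S"
proof -
  have "\<kappa> (1 - expect h) = \<kappa> (expect h)" for h :: "'x bfun"
    using sym expect_01 by blast
  then show ?thesis unfolding Hk_rep expect_not by simp
qed

lemma sum_perm:
  fixes h :: "('x::finite \<Rightarrow> bool) \<Rightarrow> real" and \<sigma> :: "'x \<Rightarrow> 'x"
  assumes "bij \<sigma>"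
  shows "sum (\<lambda>v. h (v \<circ> \<sigma>)) UNIV = sum h UNIV"
proof -
  have i1: "\<sigma> \<circ> inv \<sigma> = id" using assms by (simp add: fun_eq_iff bij_is_surj surj_f_inv_f)
  have i2: "inv \<sigma> \<circ> \<sigma> = id" using assms by (simp add: fun_eq_iff bij_is_inj inv_f_f)
  have "bij_betw (\<lambda>v::'x\<Rightarrow>bool. v \<circ> \<sigma>) UNIV UNIV"
    by (rule bij_betw_byWitness[where f'="\<lambda>v. v \<circ> inv \<sigma>"])
       (auto simp: o_assoc[symmetric] i1 i2)
  from sum.reindex_bij_betw[OF this, of h] show ?thesis .
qed

lemma avg_perm:
  fixes h :: "('x::finite \<Rightarrow> bool) \<Rightarrow> real" and \<sigma> :: "'x \<Rightarrow> 'x"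
  assumes "bij \<sigma>"
  shows "avg UNIV (\<lambda>v. h (v \<circ> \<sigma>)) = avg UNIV h"
  unfolding avg_def using sum_perm[OF assms] by simp

lemma sum_flip:
  fixes h :: "('x::finite \<Rightarrow> bool) \<Rightarrow> real"
  shows "sum (\<lambda>v. h (v(y := \<not> v y))) UNIV = sum h UNIV"
proof -
  have "bij_betw (\<lambda>v::'x\<Rightarrow>bool. v(y := \<not> v y)) UNIV UNIV"
    by (rule bij_betw_byWitness[where f'="\<lambda>v. v(y := \<not> v y)"]) (auto simp: fun_eq_iff)
  from sum.reindex_bij_betw[OF this, of h] show ?thesis .
qed

lemma avg_flip:
  fixes h :: "('x::finite \<Rightarrow> bool) \<Rightarrow> real"
  shows "avg UNIV (\<lambda>v. h (v(y := \<not> v y))) = avg UNIV h"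
  unfolding avg_def using sum_flip by simp

lemma type_perm:
  fixes f :: "('x::finite) bfun" and \<sigma> :: "'x \<Rightarrow> 'x"
  assumes "bij \<sigma>"
  shows "Hk \<kappa> f S = Hk \<kappa> (perm_bfun \<sigma> f) (\<sigma> ` S)"
proof -
  have inj: "inj \<sigma>" using assms bij_is_inj by auto
  have m: "mix (\<sigma> ` S) u v \<circ> \<sigma> = mix S (u \<circ> \<sigma>) (v \<circ> \<sigma>)" for u v :: "'x \<Rightarrow> bool"
    using inj by (auto simp: mix_def fun_eq_iff inj_image_mem_iff)
  have "Hk \<kappa> (perm_bfun \<sigma> f) (\<sigma> ` S) = avg UNIV (\<lambda>u. \<kappa> (expect (\<lambda>v. f (mix S (u \<circ> \<sigma>) (v \<circ> \<sigma>)))))"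
    unfolding Hk_rep perm_bfun_def m ..
  also have "\<dots> = avg UNIV (\<lambda>u. \<kappa> (expect (\<lambda>v. f (mix S (u \<circ> \<sigma>) v))))"
    unfolding expect_def using avg_perm[OF assms, of "\<lambda>v. of_bool (f (mix S (_ \<circ> \<sigma>) v))"] by simp
  also have "\<dots> = avg UNIV (\<lambda>u. \<kappa> (expect (\<lambda>v. f (mix S u v))))"
    by (rule avg_perm[OF assms, of "\<lambda>u. \<kappa> (expect (\<lambda>v. f (mix S u v)))"])
  finally show ?thesis unfolding Hk_rep by simp
qed

lemma type_flip:
  fixes f :: "('x::finite) bfun"
  shows "Hk \<kappa> f S = Hk \<kappa> (flip_bfun y f) S"
proof (cases "y \<in> S")
  case True
  have m: "(mix S u v)(y := \<not> mix S u v y) = mix S (u(y := \<not> u y)) v" for u v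
    using True by (auto simp: mix_def fun_eq_iff)
  have "Hk \<kappa> (flip_bfun y f) S = avg UNIV (\<lambda>u. \<kappa> (expect (\<lambda>v. f (mix S (u(y := \<not> u y)) v))))"
    unfolding Hk_rep flip_bfun_def m ..
  also have "\<dots> = Hk \<kappa> f S"
    unfolding Hk_rep by (rule avg_flip[of "\<lambda>u. \<kappa> (expect (\<lambda>v. f (mix S u v)))"])
  finally show ?thesis by simp
next
  case False
  have m: "(mix S u v)(y := \<not> mix S u v y) = mix S u (v(y := \<not> v y))" for u v
    using False by (auto simp: mix_def fun_eq_iff)
  have e: "expect (\<lambda>v. f (mix S u (v(y := \<not> v y)))) = expect (\<lambda>v. f (mix S u v))" for u
    unfolding expect_def by (rule avg_flip[of "\<lambda>v. of_bool (f (mix S u v))"])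
  show ?thesis unfolding Hk_rep flip_bfun_def m e ..
qed



definition Q :: "'x set \<Rightarrow> (('x::finite \<Rightarrow> bool) \<Rightarrow> real) \<Rightarrow> (('x \<Rightarrow> bool) \<Rightarrow> real) \<Rightarrow> real" where
  "Q S \<Phi> \<Psi> = avg UNIV (\<lambda>u. avg UNIV (\<lambda>v. \<Phi> (mix S u v)) * avg UNIV (\<lambda>v. \<Psi> (mix S u v)))"

definition rb :: "'x bfun \<Rightarrow> ('x \<Rightarrow> bool) \<Rightarrow> real" where
  "rb h = (\<lambda>u. 2 * of_bool (h u) - 1)"

lemma Hq: "Hk kappa_quad (f::('x::finite) bfun) S = Q S (rb f) (rb f)"
proof -
  have e: "kappa_quad (expect h) = avg UNIV (rb h) * avg UNIV (rb h)" for h :: "'x bfun"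
  proof -
    have a: "avg UNIV (rb h) = 2 * expect h - 1"
      unfolding rb_def expect_def by (simp add: avg_diff avg_cmult)
    show ?thesis unfolding a kappa_quad_def by (simp add: power2_eq_square algebra_simps)
  qed
  show ?thesis unfolding Hk_rep Q_def e rb_def ..
qed

lemma Qadd1: "Q S (\<lambda>u. \<Phi>1 u + \<Phi>2 u) \<Psi> = Q S \<Phi>1 \<Psi> + Q S \<Phi>2 \<Psi>"
  unfolding Q_def avg_add distrib_right ..

lemma Qadd2: "Q S \<Psi> (\<lambda>u. \<Phi>1 u + \<Phi>2 u) = Q S \<Psi> \<Phi>1 + Q S \<Psi> \<Phi>2"
  unfolding Q_def avg_add distrib_left ..

lemma Qcomm: "Q S \<Phi> \<Psi> = Q S \<Psi> \<Phi>"
  unfolding Q_def by (simp add: mult.commute)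

lemma donly_mono: "A \<subseteq> B \<Longrightarrow> donly A \<phi> \<Longrightarrow> donly B \<phi>"
  unfolding donly_def by blast

lemma donly_mult: "donly A \<phi> \<Longrightarrow> donly A \<psi> \<Longrightarrow> donly A (\<lambda>u. \<phi> u * \<psi> u)"
  unfolding donly_def by metis

lemma donly_const: "donly A (\<lambda>u. c)"
  unfolding donly_def by simp

lemma donly_inner: "donly A P \<Longrightarrow> donly A (\<lambda>v. P (mix S u v))"
  unfolding donly_def mix_def by simp

lemma donly_outer: "donly A P \<Longrightarrow> donly A (\<lambda>u. avg UNIV (\<lambda>v. P (mix S u v)))"
proof -
  assume a: "donly A P"
  show ?thesis unfolding donly_def
  proof (intro allI impI)
    fix u u' :: "'a \<Rightarrow> bool" assume h: "\<forall>y\<in>A. u y = u' y"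
    have "P (mix S u v) = P (mix S u' v)" for v
      using a h unfolding donly_def mix_def by simp
    then show "avg UNIV (\<lambda>v. P (mix S u v)) = avg UNIV (\<lambda>v. P (mix S u' v))" by simp
  qed
qed

lemma Qprod:
  fixes P P' R R' :: "('x::finite \<Rightarrow> bool) \<Rightarrow> real"
  assumes "donly A P" "donly A P'" "donly (-A) R" "donly (-A) R'"
  shows "Q S (\<lambda>u. P u * R u) (\<lambda>u. P' u * R' u) = Q S P P' * Q S R R'"
proof -
  let ?a = "\<lambda>\<Phi> u. avg UNIV (\<lambda>v. \<Phi> (mix S u v))"
  have i1: "?a (\<lambda>u. P u * R u) u = ?a P u * ?a R u" for u
    using indep[OF donly_inner[OF assms(1)] donly_inner[OF assms(3)]] by simp
  have i2: "?a (\<lambda>u. P' u * R' u) u = ?a P' u * ?a R' u" for u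
    using indep[OF donly_inner[OF assms(2)] donly_inner[OF assms(4)]] by simp
  have "Q S (\<lambda>u. P u * R u) (\<lambda>u. P' u * R' u) = avg UNIV (\<lambda>u. (?a P u * ?a P' u) * (?a R u * ?a R' u))"
    unfolding Q_def i1 i2 by (simp add: ac_simps)
  also have "\<dots> = avg UNIV (\<lambda>u. ?a P u * ?a P' u) * avg UNIV (\<lambda>u. ?a R u * ?a R' u)"
    by (rule indep[where A=A]) (intro donly_mult donly_outer assms)+
  also have "\<dots> = Q S P P' * Q S R R'" unfolding Q_def ..
  finally show ?thesis .
qed

lemma Q1: "Q S P (\<lambda>_. 1) = avg UNIV (P::('x::finite \<Rightarrow> bool) \<Rightarrow> real)"
proof -
  have "Q S P (\<lambda>_. 1) = (\<Sum>u\<in>UNIV. \<Sum>v\<in>UNIV. P (mix S u v)) / real (card (UNIV::('x\<Rightarrow>bool) set)) / real (card (UNIV::('x\<Rightarrow>bool) set))"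
    unfolding Q_def avg_const by (simp add: avg_def sum_divide_distrib)
  also have "\<dots> = avg UNIV P"
    unfolding mixsum avg_def using cardN_pos[where 'x='x] by simp
  finally show ?thesis .
qed

lemma Qins:
  assumes "donly (-{x}) \<Phi>" "donly (-{x}) \<Psi>"
  shows "Q (insert x S) \<Phi> \<Psi> = Q S \<Phi> \<Psi>" "Q (S - {x}) \<Phi> \<Psi> = Q S \<Phi> \<Psi>"
proof -
  have a: "\<Phi> (mix (insert x S) u v) = \<Phi> (mix S u v)" "\<Psi> (mix (insert x S) u v) = \<Psi> (mix S u v)"
    "\<Phi> (mix (S - {x}) u v) = \<Phi> (mix S u v)" "\<Psi> (mix (S - {x}) u v) = \<Psi> (mix S u v)" for u v
    using assms unfolding donly_def mix_def by auto
  show "Q (insert x S) \<Phi> \<Psi> = Q S \<Phi> \<Psi>" "Q (S - {x}) \<Phi> \<Psi> = Q S \<Phi> \<Psi>"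
    unfolding Q_def a by simp_all
qed



lemma donly_comp: "donly A \<phi> \<Longrightarrow> donly A (\<lambda>u. F (\<phi> u))"
  unfolding donly_def
proof (intro allI impI)
  fix u u' :: "'a \<Rightarrow> bool" assume "\<forall>u u'::'a\<Rightarrow>bool. (\<forall>y\<in>A. u y = u' y) \<longrightarrow> \<phi> u = \<phi> u'" "\<forall>y\<in>A. u y = u' y"
  then have "\<phi> u = \<phi> u'" by blast
  then show "F (\<phi> u) = F (\<phi> u')" by simp
qed

lemma donly_comp2: "donly A \<phi> \<Longrightarrow> donly A \<psi> \<Longrightarrow> donly A (\<lambda>u. F (\<phi> u) (\<psi> u))"
  unfolding donly_def
proof (intro allI impI)
  fix u u' :: "'a \<Rightarrow> bool" assume "\<forall>u u'::'a\<Rightarrow>bool. (\<forall>y\<in>A. u y = u' y) \<longrightarrow> \<phi> u = \<phi> u'" "\<forall>u u'::'a\<Rightarrow>bool. (\<forall>y\<in>A. u y = u' y) \<longrightarrow> \<psi> u = \<psi> u'" "\<forall>y\<in>A. u y = u' y"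
  then have "\<phi> u = \<phi> u'" "\<psi> u = \<psi> u'" by blast+
  then show "F (\<phi> u) (\<psi> u) = F (\<phi> u') (\<psi> u')" by simp
qed

lemma Hk_decomp:
  fixes g l1 l0 :: "('x::finite) bfun" and M K :: "('x \<Rightarrow> bool) \<Rightarrow> real"
  assumes dg: "donly D g" and d1: "donly (-D) l1" and d0: "donly (-D) l0"
    and M_def: "M = (\<lambda>u. of_bool (l1 u) - of_bool (l0 u))"
    and K_def: "K = (\<lambda>u. of_bool (l1 u) + of_bool (l0 u) - 1)"
  shows "Hk kappa_quad (\<lambda>u. (g u \<and> l1 u) \<or> (\<not> g u \<and> l0 u)) S
         = Hk kappa_quad g S * Q S M M + avg UNIV (rb g) * (Q S M K + Q S K M) + Q S K K"
proof -
  have Fe: "rb (\<lambda>u. (g u \<and> l1 u) \<or> (\<not> g u \<and> l0 u)) = (\<lambda>u. rb g u * M u + K u)"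
    by (auto simp: rb_def M_def K_def fun_eq_iff)
  have dG: "donly D (rb g)" unfolding rb_def by (rule donly_comp[OF dg])
  have dM: "donly (-D) M" unfolding M_def by (rule donly_comp2[OF d1 d0])
  have dK: "donly (-D) K" unfolding K_def by (rule donly_comp2[OF d1 d0])
  have p1: "Q S (\<lambda>u. rb g u * M u) (\<lambda>u. rb g u * M u) = Q S (rb g) (rb g) * Q S M M"
    by (rule Qprod[OF dG dG dM dM])
  have p2: "Q S (\<lambda>u. rb g u * M u) K = avg UNIV (rb g) * Q S M K"
  proof -
    have "Q S (\<lambda>u. rb g u * M u) (\<lambda>u. (\<lambda>_. 1) u * K u) = Q S (rb g) (\<lambda>_. 1) * Q S M K"
      by (rule Qprod[OF dG donly_const dM dK])
    then show ?thesis by (simp add: Q1)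
  qed
  have p3: "Q S K (\<lambda>u. rb g u * M u) = avg UNIV (rb g) * Q S K M"
  proof -
    have "Q S (\<lambda>u. (\<lambda>_. 1) u * K u) (\<lambda>u. rb g u * M u) = Q S (\<lambda>_. 1) (rb g) * Q S K M"
      by (rule Qprod[OF donly_const dG dK dM])
    then show ?thesis by (simp add: Q1 Qcomm[of S "\<lambda>_. 1"])
  qed
  show ?thesis
    unfolding Hq Fe Qadd1 Qadd2 p1 p2 p3 by (simp add: algebra_simps)
qed

lemma core:
  fixes g l1 l0 :: "('x::finite) bfun"
  assumes dg: "donly D g" and d1: "donly (-D) l1" and d0: "donly (-D) l0" and xD: "x \<in> D"
  shows "gderiv x (Hk kappa_quad (\<lambda>u. (g u \<and> l1 u) \<or> (\<not> g u \<and> l0 u))) S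
         = gderiv x (Hk kappa_quad g) S * Q S (\<lambda>u. of_bool (l1 u) - of_bool (l0 u)) (\<lambda>u. of_bool (l1 u) - of_bool (l0 u))"
proof -
  define M :: "('x \<Rightarrow> bool) \<Rightarrow> real" where "M = (\<lambda>u. of_bool (l1 u) - of_bool (l0 u))"
  define K :: "('x \<Rightarrow> bool) \<Rightarrow> real" where "K = (\<lambda>u. of_bool (l1 u) + of_bool (l0 u) - 1)"
  note dec = Hk_decomp[OF dg d1 d0 M_def K_def]
  have sub: "-D \<subseteq> -{x}" using xD by auto
  have dM: "donly (-{x}) M" unfolding M_def by (rule donly_mono[OF sub donly_comp2[OF d1 d0]])
  have dK: "donly (-{x}) K" unfolding K_def by (rule donly_mono[OF sub donly_comp2[OF d1 d0]])
  show ?thesis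
    unfolding gderiv_def dec M_def[symmetric]
    unfolding Qins[OF dM dM] Qins[OF dM dK] Qins[OF dK dM] Qins[OF dK dK]
    by (simp add: algebra_simps)
qed



lemma nd_aux:
  fixes h :: "('x::finite) \<Rightarrow> bool \<Rightarrow> bool" and u' :: "'x \<Rightarrow> bool"
  shows "finite D \<Longrightarrow> (\<forall>y\<in>D. y \<notin> dep hh) \<Longrightarrow> (\<forall>u. {y. u y \<noteq> u' y} \<subseteq> D \<longrightarrow> hh u = hh u')"
proof (induction D rule: finite_induct)
  case empty
  then show ?case by (auto simp: fun_eq_iff)
next
  case (insert y D)
  show ?case
  proof (intro allI impI)
    fix u assume sub: "{y'. u y' \<noteq> u' y'} \<subseteq> insert y D"
    let ?w = "u(y := u' y)"
    have "{y'. ?w y' \<noteq> u' y'} \<subseteq> D" using sub by auto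
    then have "hh ?w = hh u'" using insert by blast
    moreover have "hh ?w = hh u" using insert.prems by (intro nodep_upd) auto
    ultimately show "hh u = hh u'" by simp
  qed
qed

lemma donly_dep:
  fixes hh :: "('x::finite) bfun"
  assumes "\<And>y. y \<notin> A \<Longrightarrow> y \<notin> dep hh"
  shows "donly A hh"
  unfolding donly_def
proof (intro allI impI)
  fix u u' :: "'x \<Rightarrow> bool" assume a: "\<forall>y\<in>A. u y = u' y"
  have "{y. u y \<noteq> u' y} \<subseteq> -A" using a by auto
  moreover have nA: "\<forall>y\<in>-A. y \<notin> dep hh" using assms by auto
  moreover have "finite (-A)" by simp
  ultimately show "hh u = hh u'" using nd_aux[of "-A" hh u'] by blast
qed

lemma nodep_eq: "y \<notin> dep h \<Longrightarrow> h (u(y:=True)) = h (u(y:=False))"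
  using nodep_upd[of y h u True] nodep_upd[of y h u False] by simp

lemma dep_cof1: "y \<notin> dep l \<Longrightarrow> y \<notin> dep (cof1 l z c)"
proof -
  assume a: "y \<notin> dep l"
  have "cof1 (cof1 l z c) y True = cof1 (cof1 l z c) y False"
  proof (rule ext)
    fix u
    show "cof1 (cof1 l z c) y True u = cof1 (cof1 l z c) y False u"
    proof (cases "y = z")
      case True then show ?thesis by (simp add: cof1_def)
    next
      case False
      have e: "cof1 (cof1 l z c) y b u = l ((u(z:=c))(y:=b))" for b
        unfolding cof1_def using fun_upd_twist[OF False] by metis
      show ?thesis unfolding e using nodep_eq[OF a, of "u(z:=c)"] .
    qed
  qed
  then show ?thesis by (simp add: dep_def)
qed

lemma dep_witness: "y \<in> dep h \<Longrightarrow> \<exists>u. h (u(y:=True)) \<noteq> h (u(y:=False))"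
  unfolding dep_def cof1_def by (auto simp: fun_eq_iff)

lemma kq_props:
  shows "\<And>a. 0 \<le> a \<Longrightarrow> a \<le> 1 \<Longrightarrow> 0 \<le> kappa_quad a \<and> kappa_quad a \<le> 1"
    and "\<And>a b. 0 \<le> a \<Longrightarrow> a \<le> 1 \<Longrightarrow> 0 \<le> b \<Longrightarrow> b \<le> 1 \<Longrightarrow> kappa_quad ((a+b)/2) \<le> (kappa_quad a + kappa_quad b)/2"
    and "kappa_quad 0 = 1" "kappa_quad 1 = 1" "kappa_quad (1/2) = 0"
proof -
  show "kappa_quad 0 = 1" "kappa_quad 1 = 1" "kappa_quad (1/2) = 0" by (simp_all add: kappa_quad_def power2_eq_square)
  show "\<And>a. 0 \<le> a \<Longrightarrow> a \<le> 1 \<Longrightarrow> 0 \<le> kappa_quad a \<and> kappa_quad a \<le> 1"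
  proof -
    fix a :: real assume a: "0 \<le> a" "a \<le> 1"
    have e: "kappa_quad a = 1 - 4 * (a * (1 - a))" by (simp add: kappa_quad_def power2_eq_square algebra_simps)
    have "0 \<le> a * (1 - a)" using a by simp
    moreover have "0 \<le> kappa_quad a" by (simp add: kappa_quad_def)
    ultimately show "0 \<le> kappa_quad a \<and> kappa_quad a \<le> 1" unfolding e by linarith
  qed
  show "\<And>a b. 0 \<le> a \<Longrightarrow> a \<le> 1 \<Longrightarrow> 0 \<le> b \<Longrightarrow> b \<le> 1 \<Longrightarrow> kappa_quad ((a+b)/2) \<le> (kappa_quad a + kappa_quad b)/2"
  proof -
    fix a b :: real
    have e: "kappa_quad ((a+b)/2) = (kappa_quad a + kappa_quad b)/2 - (a-b)^2"
      by (simp add: kappa_quad_def power2_eq_square field_simps)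
    have "0 \<le> (a - b)^2" by simp
    then show "kappa_quad ((a+b)/2) \<le> (kappa_quad a + kappa_quad b)/2"
      unfolding e by linarith
  qed
qed



lemma Q_zero: "Q S (\<lambda>_. 0) (\<lambda>_. 0) = (0::real)"
  unfolding Q_def by simp

lemma chain:
  fixes f g l :: "('x::finite) bfun"
  assumes mv: "modular_via f g l z" and xd: "x \<in> dep g" and xgf: "xg \<notin> dep f"
  shows "gderiv x (Hk kappa_quad f) S
         = gderiv x (Hk kappa_quad g) S * gderiv xg (Hk kappa_quad (gsubst l z (var xg))) S"
proof -
  define l1 where "l1 = cof1 l z True"
  define l0 where "l0 = cof1 l z False"
  have nc: "nonconstant g" and disj: "dep l \<inter> dep g = {}" and fs: "f = subst l z g"
    using mv unfolding modular_via_def by auto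
  have fe: "f = (\<lambda>u. (g u \<and> l1 u) \<or> (\<not> g u \<and> l0 u))"
    unfolding fs subst_def l1_def l0_def ..
  have gs: "gsubst l z (var xg) = (\<lambda>u. (var xg u \<and> l1 u) \<or> (\<not> var xg u \<and> l0 u))"
    unfolding gsubst_def l1_def l0_def ..
  have dg: "donly (dep g) g" by (rule donly_dep) auto
  have d1: "donly (-dep g) l1" unfolding l1_def
    by (rule donly_dep, rule dep_cof1) (use disj in auto)
  have d0: "donly (-dep g) l0" unfolding l0_def
    by (rule donly_dep, rule dep_cof1) (use disj in auto)
  define M :: "('x \<Rightarrow> bool) \<Rightarrow> real" where "M = (\<lambda>u. of_bool (l1 u) - of_bool (l0 u))"
  have lhs: "gderiv x (Hk kappa_quad f) S = gderiv x (Hk kappa_quad g) S * Q S M M"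
    unfolding fe M_def by (rule core[OF dg d1 d0 xd])
  show ?thesis
  proof (cases "l1 = l0")
    case True
    have "Q S M M = 0" unfolding Q_def M_def True by simp
    then have l0: "gderiv x (Hk kappa_quad f) S = 0" using lhs by simp
    have "gsubst l z (var xg) = f" unfolding gs fe using True by auto
    then have "gderiv xg (Hk kappa_quad (gsubst l z (var xg))) S = 0"
      using dum_gen[OF xgf] by simp
    then show ?thesis using l0 by simp
  next
    case False
    then obtain u0 where u0: "l1 u0 \<noteq> l0 u0" by auto
    have nf: "f (w(xg:=True)) = f (w(xg:=False))" for w using nodep_eq[OF xgf] .
    have ag: "g w = g w'" if "\<forall>y\<in>dep g. w y = w' y" for w w'
      using dg that unfolding donly_def by blast
    have a1: "l1 w = l1 w'" if "\<forall>y\<in>-dep g. w y = w' y" for w w'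
      using d1 that unfolding donly_def by blast
    have a0: "l0 w = l0 w'" if "\<forall>y\<in>-dep g. w y = w' y" for w w'
      using d0 that unfolding donly_def by blast
    have xng: "xg \<notin> dep g"
    proof
      assume xin: "xg \<in> dep g"
      obtain u where u: "g (u(xg:=True)) \<noteq> g (u(xg:=False))" using dep_witness[OF xin] by blast
      define w where "w = mix (dep g) u u0"
      have gw: "g (w(xg:=c)) = g (u(xg:=c))" for c
        by (rule ag) (auto simp: w_def mix_def)
      have lw1: "l1 (w(xg:=c)) = l1 u0" for c
        by (rule a1) (use xin in \<open>auto simp: w_def mix_def\<close>)
      have lw0: "l0 (w(xg:=c)) = l0 u0" for c
        by (rule a0) (use xin in \<open>auto simp: w_def mix_def\<close>)
      have "f (w(xg:=True)) \<noteq> f (w(xg:=False))"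
        unfolding fe using gw lw1 lw0 u u0 by auto
      then show False using nf by blast
    qed
    obtain uT uF where uT: "g uT" and uF: "\<not> g uF"
      using nc unfolding nonconstant_def by blast
    have n1: "xg \<notin> dep l1"
    proof
      assume xi: "xg \<in> dep l1"
      obtain u where u: "l1 (u(xg:=True)) \<noteq> l1 (u(xg:=False))" using dep_witness[OF xi] by blast
      define w where "w = mix (dep g) uT u"
      have gw: "g (w(xg:=c)) = g uT" for c
        by (rule ag) (use xng in \<open>auto simp: w_def mix_def\<close>)
      have lw1: "l1 (w(xg:=c)) = l1 (u(xg:=c))" for c
        by (rule a1) (auto simp: w_def mix_def)
      have "f (w(xg:=True)) \<noteq> f (w(xg:=False))"
        unfolding fe using gw lw1 u uT by auto
      then show False using nf by blast
    qed
    have n0: "xg \<notin> dep l0"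
    proof
      assume xi: "xg \<in> dep l0"
      obtain u where u: "l0 (u(xg:=True)) \<noteq> l0 (u(xg:=False))" using dep_witness[OF xi] by blast
      define w where "w = mix (dep g) uF u"
      have gw: "g (w(xg:=c)) = g uF" for c
        by (rule ag) (use xng in \<open>auto simp: w_def mix_def\<close>)
      have lw0: "l0 (w(xg:=c)) = l0 (u(xg:=c))" for c
        by (rule a0) (auto simp: w_def mix_def)
      have "f (w(xg:=True)) \<noteq> f (w(xg:=False))"
        unfolding fe using gw lw0 u uF by auto
      then show False using nf by blast
    qed
    have dv: "donly {xg} (var xg)" unfolding donly_def var_def by simp
    have e1: "donly (-{xg}) l1" by (rule donly_dep) (use n1 in auto)
    have e0: "donly (-{xg}) l0" by (rule donly_dep) (use n0 in auto)
    have "gderiv xg (Hk kappa_quad (gsubst l z (var xg))) S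
          = gderiv xg (Hk kappa_quad (var xg)) S * Q S M M"
      unfolding gs M_def by (rule core[OF dv e1 e0]) simp
    also have "gderiv xg (Hk kappa_quad (var xg :: 'x bfun)) S = 1"
      using dic_gen[OF kq_props(3,4,5)] by blast
    finally show ?thesis using lhs by simp
  qed
qed

lemma modec_q:
  fixes f h g lf lh :: "('x::finite) bfun"
  assumes mf: "mono_modular_via f g lf zf" and mh: "mono_modular_via h g lh zh"
    and b1: "bge (cof1 lf zf True) (cof1 lh zh True)"
    and b0: "bge (cof1 lh zh False) (cof1 lf zf False)"
    and xd: "x \<in> dep g"
  shows "gderiv x (Hk kappa_quad f) S \<ge> gderiv x (Hk kappa_quad h) S"
proof -
  define f1 where "f1 = cof1 lf zf True"
  define f0 where "f0 = cof1 lf zf False"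
  define h1 where "h1 = cof1 lh zh True"
  define h0 where "h0 = cof1 lh zh False"
  have disf: "dep lf \<inter> dep g = {}" and fs: "f = subst lf zf g" and monf: "monotone_in lf zf"
    using mf unfolding mono_modular_via_def modular_via_def by auto
  have dish: "dep lh \<inter> dep g = {}" and hs: "h = subst lh zh g" and monh: "monotone_in lh zh"
    using mh unfolding mono_modular_via_def modular_via_def by auto
  have fe: "f = (\<lambda>u. (g u \<and> f1 u) \<or> (\<not> g u \<and> f0 u))"
    unfolding fs subst_def f1_def f0_def ..
  have he: "h = (\<lambda>u. (g u \<and> h1 u) \<or> (\<not> g u \<and> h0 u))"
    unfolding hs subst_def h1_def h0_def ..
  have dg: "donly (dep g) g" by (rule donly_dep) auto
  have df1: "donly (-dep g) f1" unfolding f1_def by (rule donly_dep, rule dep_cof1) (use disf in auto)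
  have df0: "donly (-dep g) f0" unfolding f0_def by (rule donly_dep, rule dep_cof1) (use disf in auto)
  have dh1: "donly (-dep g) h1" unfolding h1_def by (rule donly_dep, rule dep_cof1) (use dish in auto)
  have dh0: "donly (-dep g) h0" unfolding h0_def by (rule donly_dep, rule dep_cof1) (use dish in auto)
  define Mf :: "('x \<Rightarrow> bool) \<Rightarrow> real" where "Mf = (\<lambda>u. of_bool (f1 u) - of_bool (f0 u))"
  define Mh :: "('x \<Rightarrow> bool) \<Rightarrow> real" where "Mh = (\<lambda>u. of_bool (h1 u) - of_bool (h0 u))"
  have cf: "gderiv x (Hk kappa_quad f) S = gderiv x (Hk kappa_quad g) S * Q S Mf Mf"
    unfolding fe Mf_def by (rule core[OF dg df1 df0 xd])
  have ch: "gderiv x (Hk kappa_quad h) S = gderiv x (Hk kappa_quad g) S * Q S Mh Mh"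
    unfolding he Mh_def by (rule core[OF dg dh1 dh0 xd])
  have gpos: "0 \<le> gderiv x (Hk kappa_quad g) S"
    using bound_gen[OF kq_props(1,2)] by blast
  have mh0: "0 \<le> Mh u" for u
    using monh unfolding monotone_in_def Mh_def h1_def h0_def by (cases "cof1 lh zh False u") auto
  have mhf: "Mh u \<le> Mf u" for u
    using b1 b0 monh unfolding bge_def Mh_def Mf_def f1_def f0_def h1_def h0_def monotone_in_def
    by (cases "cof1 lh zh True u"; cases "cof1 lh zh False u"; cases "cof1 lf zf True u"; cases "cof1 lf zf False u") auto
  have "Q S Mh Mh \<le> Q S Mf Mf"
    unfolding Q_def
  proof (rule avg_mono)
    fix u
    let ?a = "avg UNIV (\<lambda>v. Mh (mix S u v))" and ?b = "avg UNIV (\<lambda>v. Mf (mix S u v))"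
    have "0 \<le> ?a" using avg_mono[of "\<lambda>_. 0" "\<lambda>v. Mh (mix S u v)" UNIV] mh0 by simp
    moreover have "?a \<le> ?b" by (rule avg_mono) (rule mhf)
    ultimately show "?a * ?a \<le> ?b * ?b" by (intro mult_mono) auto
  qed
  then show ?thesis unfolding cf ch using gpos by (intro mult_left_mono)
qed

theorem mainTheorem16:
  fixes \<kappa> :: "real \<Rightarrow> real"
  assumes "constancy_measure \<kappa>"
  shows "unbiased (Hk \<kappa> :: ('x::finite) cgm) \<and> bound_cg (Hk \<kappa> :: 'x cgm)
         \<and> dic_cg (Hk \<kappa> :: 'x cgm) \<and> dum_cg (Hk \<kappa> :: 'x cgm) \<and> type_cg (Hk \<kappa> :: 'x cgm)
         \<and> chain_rule_decomposable (Hk kappa_quad :: 'x cgm)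
         \<and> modec_cg (Hk kappa_quad :: 'x cgm)"
proof (intro conjI)
  note cm = cm_props[OF assms]
  show "unbiased (Hk \<kappa> :: 'x cgm)"
    unfolding unbiased_def using unbiased_gen[where \<kappa>=\<kappa>, OF cm(6)] by (auto simp: fun_eq_iff)
  show "bound_cg (Hk \<kappa> :: 'x cgm)"
    unfolding bound_cg_def using bound_gen[where \<kappa>=\<kappa>, OF cm(1,2)] by blast
  show "dic_cg (Hk \<kappa> :: 'x cgm)"
    unfolding dic_cg_def using dic_gen[where \<kappa>=\<kappa>, OF cm(3,4,5)] by blast
  show "dum_cg (Hk \<kappa> :: 'x cgm)"
    unfolding dum_cg_def using dum_gen by blast
  show "type_cg (Hk \<kappa> :: 'x cgm)"
    unfolding type_cg_def using type_perm type_flip by blast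
  show "chain_rule_decomposable (Hk kappa_quad :: 'x cgm)"
    unfolding chain_rule_decomposable_def using chain by blast
  show "modec_cg (Hk kappa_quad :: 'x cgm)"
    unfolding modec_cg_def using modec_q by blast
qed


end
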